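(* Let $R$ be a finite (associative, not necessarily unital) ring. (i) There exists $t\ge1$ such that $x^t=x^{2t}$ for all $x$ in $(R,\cdot)$, and there exists $t\ge1$ such that the $t$-th power of every element of $(R,\circ)$ equals its $2t$-th power in $(R,\circ)$. (ii) If all idempotents of $R$ are central, then $(R,\cdot)$ satisfies a reduced semigroup identity.
   Context: $(R,\circ)$ is $R$ with the operation $x\circ y=x+y+xy$ (powers in part (i) for $(R,\circ)$ are taken with respect to $\circ$). A semigroup identity is $u=v$ with $u\ne v$ words in a free semigroup holding under all substitutions; it is reduced if the first letters of $u,v$ differ and the last letters of $u,v$ differ. *)

theory Defs
  imports Main
begin

fun spow :: "('a \<Rightarrow> 'a \<Rightarrow> 'a) \<Rightarrow> 'a \<Rightarrow> nat \<Rightarrow> 'a" where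
  "spow f x 0 = undefined"
| "spow f x (Suc 0) = x"
| "spow f x (Suc (Suc n)) = f (spow f x (Suc n)) x"

definition circ_op :: "'a::ring \<Rightarrow> 'a \<Rightarrow> 'a" where
  "circ_op x y = x + y + x * y"

text \<open>Words of the free semigroup on letters nat are nonempty lists; evaluation
  under a substitution \<sigma> in a semigroup with operation f.\<close>
fun word_eval :: "('a \<Rightarrow> 'a \<Rightarrow> 'a) \<Rightarrow> (nat \<Rightarrow> 'a) \<Rightarrow> nat list \<Rightarrow> 'a" where
  "word_eval f \<sigma> [] = undefined"
| "word_eval f \<sigma> [x] = \<sigma> x"
| "word_eval f \<sigma> (x # y # ys) = f (\<sigma> x) (word_eval f \<sigma> (y # ys))"

definition semigroup_identity :: "('a \<Rightarrow> 'a \<Rightarrow> 'a) \<Rightarrow> nat list \<Rightarrow> nat list \<Rightarrow> bool" where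
  "semigroup_identity f u v \<longleftrightarrow> u \<noteq> [] \<and> v \<noteq> [] \<and> u \<noteq> v \<and>
     (\<forall>\<sigma>. word_eval f \<sigma> u = word_eval f \<sigma> v)"

definition reduced_identity :: "nat list \<Rightarrow> nat list \<Rightarrow> bool" where
  "reduced_identity u v \<longleftrightarrow> hd u \<noteq> hd v \<and> last u \<noteq> last v"

end

theory Submission
  imports Defs
begin

lemma spow_add:
  assumes assoc: "\<And>a b c. f (f a b) c = f a (f b c)"
  shows "spow f x (Suc m + Suc n) = f (spow f x (Suc m)) (spow f x (Suc n))"
proof (induction n)
  case 0
  then show ?case by simp
next
  case (Suc n)
  have e: "Suc m + Suc (Suc n) = Suc (Suc (m + Suc n))" by simp
  have "spow f x (Suc m + Suc (Suc n)) = f (spow f x (Suc m + Suc n)) x"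
    unfolding e by simp
  also have "\<dots> = f (spow f x (Suc m)) (spow f x (Suc (Suc n)))"
    using Suc by (simp add: assoc)
  finally show ?case .
qed

lemma spow_comm:
  assumes assoc: "\<And>a b c. f (f a b) c = f a (f b c)"
  shows "f x (spow f x (Suc n)) = f (spow f x (Suc n)) x"
proof (induction n)
  case 0 then show ?case by simp
next
  case (Suc n)
  then show ?case by (simp add: assoc[symmetric])
qed

lemma spow_shift:
  assumes "spow f x (Suc k) = spow f x (Suc (k + d))" "k \<le> l"
  shows "spow f x (Suc l) = spow f x (Suc (l + d))"
  using assms(2)
proof (induction l rule: dec_induct)
  case base then show ?case using assms(1) by simp
next
  case (step l)
  then show ?case by simp
qed

lemma spow_shift_mult:
  assumes "\<And>l. k \<le> l \<Longrightarrow> spow f x (Suc l) = spow f x (Suc (l + d))" "k \<le> l"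
  shows "spow f x (Suc l) = spow f x (Suc (l + c * d))"
proof (induction c)
  case 0 then show ?case by simp
next
  case (Suc c)
  have "spow f x (Suc (l + Suc c * d)) = spow f x (Suc ((l + c * d) + d))"
    by (simp add: algebra_simps)
  also have "\<dots> = spow f x (Suc (l + c * d))"
    using assms(1)[of "l + c*d"] assms(2) by simp
  finally show ?case using Suc by simp
qed

lemma finite_period:
  fixes f :: "'a::finite \<Rightarrow> 'a \<Rightarrow> 'a"
  assumes assoc: "\<And>a b c. f (f a b) c = f a (f b c)"
  shows "\<exists>t::nat. t \<ge> 1 \<and> (\<forall>x::'a. spow f x t = spow f x (2 * t))"
proof -
  define n where "n = card (UNIV :: 'a set)"
  have n1: "n \<ge> 1" unfolding n_def by (simp add: Suc_le_eq card_gt_0_iff)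
  define T :: nat where "T = fact n"
  have T1: "T \<ge> 1" unfolding T_def by simp
  have nT: "n \<le> T" unfolding T_def by (rule fact_ge_self)
  have "spow f x T = spow f x (2 * T)" for x
  proof -
    let ?g = "\<lambda>k. spow f x (Suc k)"
    have "card (?g ` {0..n}) \<le> card (UNIV :: 'a set)"
      by (rule card_mono) auto
    also have "\<dots> < card {0..n}" unfolding n_def by simp
    finally have "\<not> inj_on ?g {0..n}" using card_image by fastforce
    then obtain i j where ij: "i \<le> n" "j \<le> n" "i \<noteq> j" "?g i = ?g j"
      unfolding inj_on_def by auto
    then obtain a b where ab: "a < b" "b \<le> n" "?g a = ?g b"
      by (metis linorder_neqE_nat)
    define d where "d = b - a"
    have d: "d \<ge> 1" "d \<le> n" using ab unfolding d_def by auto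
    have a: "a \<le> T - 1" using ab nT by linarith
    have per: "\<And>l. a \<le> l \<Longrightarrow> ?g l = ?g (l + d)"
      by (rule spow_shift[of f x a d]) (use ab d_def in auto)
    have "d dvd T" unfolding T_def using d by (simp add: dvd_fact)
    then obtain c where c: "T = c * d" by (metis dvd_def mult.commute)
    have "?g (T - 1) = ?g (T - 1 + c * d)"
      by (rule spow_shift_mult[OF per a])
    moreover have "Suc (T - 1) = T" "Suc (T - 1 + c * d) = 2 * T" using T1 c by auto
    ultimately show ?thesis by metis
  qed
  then show ?thesis using T1 by blast
qed

lemma circ_assoc: "circ_op (circ_op a b) c = circ_op a (circ_op b (c::'a::ring))"
  unfolding circ_op_def by (simp add: algebra_simps)

lemma word_eval_Cons:
  "w \<noteq> [] \<Longrightarrow> word_eval f \<sigma> (a # w) = f (\<sigma> a) (word_eval f \<sigma> w)"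
  by (cases w) auto

lemma word_eval_append:
  assumes assoc: "\<And>a b c. f (f a b) c = f a (f b c)"
  shows "u \<noteq> [] \<Longrightarrow> v \<noteq> [] \<Longrightarrow> word_eval f \<sigma> (u @ v) = f (word_eval f \<sigma> u) (word_eval f \<sigma> v)"
proof (induction u)
  case Nil then show ?case by simp
next
  case (Cons a u)
  show ?case
  proof (cases "u = []")
    case True then show ?thesis using Cons by (simp add: word_eval_Cons)
  next
    case False
    then show ?thesis using Cons by (simp add: word_eval_Cons assoc)
  qed
qed

lemma word_eval_rep:
  assumes assoc: "\<And>a b c. f (f a b) c = f a (f b c)"
  shows "word_eval f \<sigma> (replicate (Suc n) a) = spow f (\<sigma> a) (Suc n)"
proof (induction n)
  case 0 then show ?case by simp
next
  case (Suc n)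
  have "word_eval f \<sigma> (replicate (Suc (Suc n)) a) = f (\<sigma> a) (word_eval f \<sigma> (replicate (Suc n) a))"
    by (simp add: word_eval_Cons)
  also have "\<dots> = f (\<sigma> a) (spow f (\<sigma> a) (Suc n))" using Suc by simp
  also have "\<dots> = spow f (\<sigma> a) (Suc (Suc n))" using spow_comm[OF assoc] by simp
  finally show ?case .
qed

theorem proposition4p1:
  fixes R :: "'a::{ring, finite} itself"
  shows "((\<exists>t::nat. t \<ge> 1 \<and> (\<forall>x::'a. spow (*) x t = spow (*) x (2 * t))) \<and>
          (\<exists>t::nat. t \<ge> 1 \<and> (\<forall>x::'a. spow circ_op x t = spow circ_op x (2 * t))))
       \<and> ((\<forall>e::'a. e * e = e \<longrightarrow> (\<forall>x::'a. e * x = x * e)) \<longrightarrow>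
          (\<exists>u v. semigroup_identity ((*) :: 'a \<Rightarrow> 'a \<Rightarrow> 'a) u v \<and> reduced_identity u v))"
proof (intro conjI impI)
  have massoc: "\<And>a b c::'a. (a * b) * c = a * (b * c)" by (simp add: mult.assoc)
  show P1: "\<exists>t::nat. t \<ge> 1 \<and> (\<forall>x::'a. spow (*) x t = spow (*) x (2 * t))"
    by (rule finite_period) (simp add: mult.assoc)
  show "\<exists>t::nat. t \<ge> 1 \<and> (\<forall>x::'a. spow circ_op x t = spow circ_op x (2 * t))"
    by (rule finite_period) (rule circ_assoc)
  assume cen: "\<forall>e::'a. e * e = e \<longrightarrow> (\<forall>x::'a. e * x = x * e)"
  from P1 obtain t where t: "t \<ge> 1" "\<forall>x::'a. spow (*) x t = spow (*) x (2 * t)" by blast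
  then obtain s where s: "t = Suc s" by (cases t) auto
  define u where "u = replicate t (0::nat) @ replicate t 1"
  define v where "v = replicate t (1::nat) @ replicate t 0"
  have idem: "spow (*) x t * spow (*) x t = spow (*) x t" for x :: 'a
  proof -
    have "spow (*) x t * spow (*) x t = spow (*) x (Suc s + Suc s)"
      using spow_add[of "(*)", OF massoc] s by simp
    also have "\<dots> = spow (*) x (2 * t)" using s by (simp only: mult_2)
    finally show ?thesis using t by simp
  qed
  have "word_eval (*) \<sigma> u = word_eval (*) \<sigma> v" for \<sigma> :: "nat \<Rightarrow> 'a"
  proof -
    have "word_eval (*) \<sigma> u = word_eval (*) \<sigma> (replicate (Suc s) 0) * word_eval (*) \<sigma> (replicate (Suc s) 1)"
      unfolding u_def s by (rule word_eval_append[of "(*)", OF massoc]) simp_all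
    also have "\<dots> = spow (*) (\<sigma> 0) t * spow (*) (\<sigma> 1) t"
      unfolding s by (simp only: word_eval_rep[of "(*)", OF massoc])
    also have "\<dots> = spow (*) (\<sigma> 1) t * spow (*) (\<sigma> 0) t"
      using cen idem by blast
    also have "\<dots> = word_eval (*) \<sigma> (replicate (Suc s) 1) * word_eval (*) \<sigma> (replicate (Suc s) 0)"
      unfolding s by (simp only: word_eval_rep[of "(*)", OF massoc])
    also have "\<dots> = word_eval (*) \<sigma> v"
      unfolding v_def s by (rule word_eval_append[of "(*)", OF massoc, symmetric]) simp_all
    finally show ?thesis .
  qed
  moreover have "u \<noteq> []" "v \<noteq> []" "u \<noteq> v" "reduced_identity u v"
    unfolding u_def v_def reduced_identity_def s by auto
  ultimately show "\<exists>u v. semigroup_identity ((*) :: 'a \<Rightarrow> 'a \<Rightarrow> 'a) u v \<and> reduced_identity u v"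
    unfolding semigroup_identity_def by blast
qed

end
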